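(* Let $G$ be a finite, connected, undirected, unweighted graph without self-loops on $N=N_{\mathrm{G}}+N_{\mathrm{R}}$ vertices, properly two-colored with $N_{\mathrm{G}}$ green and $N_{\mathrm{R}}$ red vertices. Suppose every green vertex has degree $k_{\mathrm{G}}$ and every red vertex has degree $k_{\mathrm{R}}$. Let $a_{\mathrm{G}},a_{\mathrm{R}},b_{\mathrm{G}},b_{\mathrm{R}}>0$ with $a_{\mathrm{G}}a_{\mathrm{R}}\neq b_{\mathrm{G}}b_{\mathrm{R}}$. Define $$\zeta_{\mathrm{G}}=\frac{b_{\mathrm{R}}(a_{\mathrm{R}}k_{\mathrm{G}}+b_{\mathrm{G}}k_{\mathrm{R}})}{a_{\mathrm{R}}(a_{\mathrm{G}}k_{\mathrm{R}}+b_{\mathrm{R}}k_{\mathrm{G}})},\qquad \zeta_{\mathrm{R}}=\frac{b_{\mathrm{G}}(a_{\mathrm{G}}k_{\mathrm{R}}+b_{\mathrm{R}}k_{\mathrm{G}})}{a_{\mathrm{G}}(a_{\mathrm{R}}k_{\mathrm{G}}+b_{\mathrm{G}}k_{\mathrm{R}})}.$$ Then in the colored Moran process on $G$, the mean fixation probability of a single $A$ placed at a uniformly random vertex in a population otherwise of type $B$ is $$\rho_A=\frac{1-\frac{1}{N}\left(N_{\mathrm{G}}\zeta_{\mathrm{G}}+N_{\mathrm{R}}\zeta_{\mathrm{R}}\right)}{1-\zeta_{\mathrm{G}}^{N_{\mathrm{G}}}\zeta_{\mathrm{R}}^{N_{\mathrm{R}}}}.$$ Likewise, the mean fixation probability $\rho_B$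 of a single $B$ placed at a uniformly random vertex in a population otherwise of type $A$ is given by the same formula with the roles of $a$ and $b$ interchanged, i.e. $$\rho_B=\frac{1-\frac{1}{N}\left(N_{\mathrm{G}}\eta_{\mathrm{G}}+N_{\mathrm{R}}\eta_{\mathrm{R}}\right)}{1-\eta_{\mathrm{G}}^{N_{\mathrm{G}}}\eta_{\mathrm{R}}^{N_{\mathrm{R}}}},\quad \eta_{\mathrm{G}}=\frac{a_{\mathrm{R}}(b_{\mathrm{R}}k_{\mathrm{G}}+a_{\mathrm{G}}k_{\mathrm{R}})}{b_{\mathrm{R}}(b_{\mathrm{G}}k_{\mathrm{R}}+a_{\mathrm{R}}k_{\mathrm{G}})},\ \eta_{\mathrm{R}}=\frac{a_{\mathrm{G}}(b_{\mathrm{G}}k_{\mathrm{R}}+a_{\mathrm{R}}k_{\mathrm{G}})}{b_{\mathrm{G}}(b_{\mathrm{R}}k_{\mathrm{G}}+a_{\mathrm{G}}k_{\mathrm{R}})}.$$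
   Context: A proper two-coloring assigns each vertex one of two colors, green or red, so that no two adjacent vertices have the same color. Each vertex is occupied by one individual of type $A$ (mutant) or $B$ (resident). The fitness of an individual depends on its type and the color of its vertex: type $A$ has fitness $a_{\mathrm{G}}$ on green and $a_{\mathrm{R}}$ on red vertices; type $B$ has fitness $b_{\mathrm{G}}$ on green and $b_{\mathrm{R}}$ on red vertices. Colors are fixed over time. Colored Moran (birth-death) process: in each time step, one individual is chosen to reproduce with probability proportional to its fitness (relative to the total fitness of the population); its offspring (of the same type) replaces the occupant of a neighbor chosen uniformly at random among the parent's neighbors. The fixation probability of $A$ is the probability that the process is absorbed in the all-$A$ state. *)

theory Defs
  imports Complex_Main
begin

(* A state of the colored Moran process is the set S \<subseteq> V of vertices occupied by type A. *)

definition nbrs :: "'v set \<Rightarrow> ('v \<Rightarrow> 'v \<Rightarrow> bool) \<Rightarrow> 'v \<Rightarrow> 'v set" where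
  "nbrs V E u = {v \<in> V. E u v}"

definition fitness :: "('v \<Rightarrow> bool) \<Rightarrow> real \<Rightarrow> real \<Rightarrow> real \<Rightarrow> real \<Rightarrow> 'v set \<Rightarrow> 'v \<Rightarrow> real" where
  "fitness green aG aR bG bR S u =
     (if u \<in> S then (if green u then aG else aR) else (if green u then bG else bR))"

definition total_fitness :: "'v set \<Rightarrow> ('v \<Rightarrow> bool) \<Rightarrow> real \<Rightarrow> real \<Rightarrow> real \<Rightarrow> real \<Rightarrow> 'v set \<Rightarrow> real" where
  "total_fitness V green aG aR bG bR S = (\<Sum>w\<in>V. fitness green aG aR bG bR S w)"

(* state after u reproduces and its offspring replaces the occupant of v *)
definition moran_update :: "'v set \<Rightarrow> 'v \<Rightarrow> 'v \<Rightarrow> 'v set" where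
  "moran_update S u v = (if u \<in> S then insert v S else S - {v})"

(* absorbed_by V E green aG aR bG bR T n S = probability that the colored Moran process started
   in state S is in the (absorbing) state T at time n, i.e. has been absorbed in T by time n. *)
fun absorbed_by :: "'v set \<Rightarrow> ('v \<Rightarrow> 'v \<Rightarrow> bool) \<Rightarrow> ('v \<Rightarrow> bool) \<Rightarrow> real \<Rightarrow> real \<Rightarrow> real \<Rightarrow> real
    \<Rightarrow> 'v set \<Rightarrow> nat \<Rightarrow> 'v set \<Rightarrow> real" where
  "absorbed_by V E green aG aR bG bR T 0 S = (if S = T then 1 else 0)"
| "absorbed_by V E green aG aR bG bR T (Suc n) S =
     (if S = T then 1 else
      (\<Sum>u\<in>V. \<Sum>v\<in>nbrs V E u.
          fitness green aG aR bG bR S u / total_fitness V green aG aR bG bR S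
          * (1 / real (card (nbrs V E u)))
          * absorbed_by V E green aG aR bG bR T n (moran_update S u v)))"

definition absorption_prob :: "'v set \<Rightarrow> ('v \<Rightarrow> 'v \<Rightarrow> bool) \<Rightarrow> ('v \<Rightarrow> bool) \<Rightarrow> real \<Rightarrow> real \<Rightarrow> real \<Rightarrow> real
    \<Rightarrow> 'v set \<Rightarrow> 'v set \<Rightarrow> real" where
  "absorption_prob V E green aG aR bG bR T S = lim (\<lambda>n. absorbed_by V E green aG aR bG bR T n S)"

definition rho_A :: "'v set \<Rightarrow> ('v \<Rightarrow> 'v \<Rightarrow> bool) \<Rightarrow> ('v \<Rightarrow> bool) \<Rightarrow> real \<Rightarrow> real \<Rightarrow> real \<Rightarrow> real \<Rightarrow> real" where
  "rho_A V E green aG aR bG bR =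
     (\<Sum>v\<in>V. absorption_prob V E green aG aR bG bR V {v}) / real (card V)"

definition rho_B :: "'v set \<Rightarrow> ('v \<Rightarrow> 'v \<Rightarrow> bool) \<Rightarrow> ('v \<Rightarrow> bool) \<Rightarrow> real \<Rightarrow> real \<Rightarrow> real \<Rightarrow> real \<Rightarrow> real" where
  "rho_B V E green aG aR bG bR =
     (\<Sum>v\<in>V. absorption_prob V E green aG aR bG bR {} (V - {v})) / real (card V)"

end

theory Submission
  imports Defs
begin

lemma idgen:
  fixes aG aR bG bR kG kR X Y :: real
  assumes "aG > 0" "aR > 0" "bG > 0" "bR > 0" "kG > 0" "kR > 0"
    and Xd: "X = aR * kG + bG * kR" and Yd: "Y = aG * kR + bR * kG"
  shows "aG / kG * (bR * X / (aR * Y)) * (bG * Y / (aG * X) - 1) + bR / kR * (1 - bR * X / (aR * Y)) = 0"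
proof -
  have X: "X > 0" and Y: "Y > 0" using assms by (simp_all add: add_pos_pos)
  have e1: "bG * Y - aG * X = kG * (bG*bR - aG*aR)" unfolding Xd Yd by (simp add: algebra_simps)
  have e2: "aR * Y - bR * X = kR * (aR*aG - bR*bG)" unfolding Xd Yd by (simp add: algebra_simps)
  have 1: "bG * Y / (aG * X) - 1 = (bG * Y - aG * X) / (aG * X)"
    using X assms(1-6) by (simp add: field_simps)
  have 2: "1 - bR * X / (aR * Y) = (aR * Y - bR * X) / (aR * Y)"
    using Y assms(1-6) by (simp add: field_simps)
  have 3: "aG / kG * (bR * X / (aR * Y)) * (kG * (bG*bR - aG*aR) / (aG * X)) = bR * (bG*bR - aG*aR) / (aR * Y)"
    using X Y assms(1-6) by (simp add: field_simps)
  have 4: "bR / kR * (kR * (aR*aG - bR*bG) / (aR * Y)) = bR * (aR*aG - bR*bG) / (aR * Y)"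
    using X Y assms(1-6) by (simp add: field_simps)
  show ?thesis unfolding 1 2 e1 e2 3 4 by (simp add: add_divide_distrib[symmetric] algebra_simps)
qed
lemma zzgen:
  fixes aG aR bG bR X Y :: real
  assumes "aG > 0" "aR > 0" "X > 0" "Y > 0"
  shows "bR * X / (aR * Y) * (bG * Y / (aG * X)) = bR * bG / (aR * aG)"
  using assms by (simp add: field_simps)
lemma pairgen:
  fixes a b F k k' p z1 z2 :: real
  assumes "F \<noteq> 0" "k \<noteq> 0" "k' \<noteq> 0"
  shows "a/F*(1/k)*(p*z1*z2 - p*z1) + b/F*(1/k')*(p - p*z1) = p/F*(a/k*z1*(z2-1) + b/k'*(1-z1))"
  using assms by (simp add: field_simps)
lemma finalB:
  fixes N F s :: real
  assumes "N > 0" "F > 0" "F \<noteq> 1"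
  shows "(F * s - F * N) / (1 - F) / N = (1 - s / N) / (1 - 1 / F)"
proof -
  have a: "1 - F \<noteq> 0" "F - 1 \<noteq> 0" using assms by auto
  have "(1 - s / N) / (1 - 1 / F) = ((N - s) / N) / ((F - 1) / F)" using assms by (simp add: field_simps)
  also have "\<dots> = F * (N - s) / (N * (F - 1))" using assms a by (simp add: field_simps)
  also have "\<dots> = F * (s - N) / (N * (1 - F))" 
    by (metis minus_diff_eq mult_minus_right minus_divide_divide)
  finally show ?thesis using assms a by (simp add: field_simps)
qed


lemma edge_out: "E\<^sup>*\<^sup>* s t \<Longrightarrow> s \<in> S \<Longrightarrow> t \<notin> S \<Longrightarrow> \<exists>u v. E u v \<and> u \<in> S \<and> v \<notin> S"
  by (induction rule: rtranclp_induct) auto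

locale moran =
  fixes V :: "'v set" and E :: "'v \<Rightarrow> 'v \<Rightarrow> bool" and green :: "'v \<Rightarrow> bool"
    and aG aR bG bR :: real and kG kR :: nat
  assumes finV: "finite V" and Vne: "V \<noteq> {}"
    and E_in_V: "\<And>u v. E u v \<Longrightarrow> u \<in> V \<and> v \<in> V"
    and E_sym: "\<And>u v. E u v \<Longrightarrow> E v u"
    and connected: "\<forall>u\<in>V. \<forall>v\<in>V. E\<^sup>*\<^sup>* u v"
    and proper: "\<And>u v. E u v \<Longrightarrow> green u \<noteq> green v"
    and deg_G: "\<And>u. u \<in> V \<Longrightarrow> green u \<Longrightarrow> card (nbrs V E u) = kG"
    and deg_R: "\<And>u. u \<in> V \<Longrightarrow> \<not> green u \<Longrightarrow> card (nbrs V E u) = kR"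
    and aG: "aG > 0" and aR: "aR > 0" and bG: "bG > 0" and bR: "bR > 0"
    and kG: "kG > 0" and kR: "kR > 0"
    and neq: "aG * aR \<noteq> bG * bR"
begin

definition wt where "wt S u v = fitness green aG aR bG bR S u / total_fitness V green aG aR bG bR S * (1 / real (card (nbrs V E u)))"

definition K :: "('v set \<Rightarrow> real) \<Rightarrow> 'v set \<Rightarrow> real" where
 "K g S = (\<Sum>u\<in>V. \<Sum>v\<in>nbrs V E u. wt S u v * g (moran_update S u v))"

definition harm where "harm g \<longleftrightarrow> (\<forall>S\<subseteq>V. K g S = g S)"

lemma fin_nbrs: "finite (nbrs V E u)" using finV by (simp add: nbrs_def)
lemma card_nbrs_pos: "u \<in> V \<Longrightarrow> card (nbrs V E u) > 0" using deg_G deg_R kG kR by (cases "green u") auto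
lemma fit_pos: "fitness green aG aR bG bR S u > 0" using aG aR bG bR by (simp add: fitness_def)
lemma F_pos: "total_fitness V green aG aR bG bR S > 0"
  unfolding total_fitness_def using finV Vne fit_pos by (intro sum_pos) auto
lemma wt_nonneg: "wt S u v \<ge> 0" using fit_pos[of S u] F_pos[of S] unfolding wt_def by simp
lemma wt_pos: "u \<in> V \<Longrightarrow> wt S u v > 0" using fit_pos[of S u] F_pos[of S] card_nbrs_pos[of u] unfolding wt_def by simp
lemma wt_sum: "(\<Sum>u\<in>V. \<Sum>v\<in>nbrs V E u. wt S u v) = 1"
proof -
  have "(\<Sum>v\<in>nbrs V E u. wt S u v) = fitness green aG aR bG bR S u / total_fitness V green aG aR bG bR S" if "u \<in> V" for u
    using card_nbrs_pos[OF that] by (simp add: wt_def)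
  then have "(\<Sum>u\<in>V. \<Sum>v\<in>nbrs V E u. wt S u v) = (\<Sum>u\<in>V. fitness green aG aR bG bR S u / total_fitness V green aG aR bG bR S)" by simp
  also have "\<dots> = 1" using F_pos[of S] by (simp add: sum_divide_distrib[symmetric] total_fitness_def)
  finally show ?thesis .
qed

lemma upd_sub: "S \<subseteq> V \<Longrightarrow> u \<in> V \<Longrightarrow> v \<in> nbrs V E u \<Longrightarrow> moran_update S u v \<subseteq> V"
  by (auto simp: moran_update_def nbrs_def)

lemma K_diff: "K (\<lambda>S. f S - g S) S = K f S - K g S" by (simp add: K_def algebra_simps sum_subtractf)
lemma K_cmult: "K (\<lambda>S. c * f S) S = c * K f S" by (simp add: K_def sum_distrib_left algebra_simps)
lemma K_neg: "K (\<lambda>S. - f S) S = - K f S" by (simp add: K_def sum_negf)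
lemma K_const: "K (\<lambda>S. c) S = c" using wt_sum[of S] by (simp add: K_def flip: sum_distrib_right)

lemma max_principle:
  assumes h: "harm h" and hV: "h V \<le> 0" and h0: "h {} \<le> 0" and S: "S \<subseteq> V"
  shows "h S \<le> 0"
proof -
  let ?M = "Max (h ` Pow V)"
  have finP: "finite (h ` Pow V)" using finV by simp
  have Mge: "h T \<le> ?M" if "T \<subseteq> V" for T using finP that by (intro Max_ge) auto
  have key: "h T = ?M \<Longrightarrow> T \<subseteq> V \<Longrightarrow> ?M \<le> 0" for T
  proof (induction "card (V - T)" arbitrary: T rule: less_induct)
    case less
    show ?case
    proof (cases "T = V \<or> T = {}")
      case True then show ?thesis using less.prems hV h0 by auto
    next
      case False
      then obtain s t where st: "s \<in> T" "t \<in> V" "t \<notin> T" using less.prems(2) by auto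
      hence "s \<in> V" using less.prems by auto
      have "E\<^sup>*\<^sup>* s t" using connected \<open>s \<in> V\<close> st(2) by simp
      then obtain u v where uv: "E u v" "u \<in> T" "v \<notin> T" using edge_out[OF _ st(1) st(3)] by blast
      have uV: "u \<in> V" and vV: "v \<in> V" using E_in_V[OF uv(1)] by auto
      have vn: "v \<in> nbrs V E u" using uv vV by (simp add: nbrs_def)
      define g where "g u' v' = wt T u' v' * (?M - h (moran_update T u' v'))" for u' v'
      have terms: "(\<Sum>u\<in>V. \<Sum>v\<in>nbrs V E u. g u v) = 0"
      proof -
        have "(\<Sum>u\<in>V. \<Sum>v\<in>nbrs V E u. g u v) = K (\<lambda>S. ?M - h S) T" by (simp add: K_def g_def)
        also have "\<dots> = ?M - h T" using K_diff K_const h less.prems(2) by (simp add: harm_def)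
        also have "\<dots> = 0" using less.prems by simp
        finally show ?thesis .
      qed
      have nonneg: "g u' v' \<ge> 0" if "u' \<in> V" "v' \<in> nbrs V E u'" for u' v'
        using wt_nonneg Mge[OF upd_sub[OF less.prems(2) that]] unfolding g_def by (intro mult_nonneg_nonneg) auto
      have "\<forall>x\<in>V. (\<Sum>v\<in>nbrs V E x. g x v) = 0"
        using terms sum_nonneg_eq_0_iff[of V "\<lambda>x. \<Sum>v\<in>nbrs V E x. g x v"] finV nonneg
        by (simp add: sum_nonneg)
      hence "(\<Sum>v\<in>nbrs V E u. g u v) = 0" using uV by blast
      hence "g u v = 0" using sum_nonneg_eq_0_iff[of "nbrs V E u" "g u"] fin_nbrs nonneg uV vn by auto
      hence hv: "h (insert v T) = ?M" using wt_pos[OF uV, of T v] uv(2) unfolding g_def moran_update_def by simp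
      have "card (V - insert v T) < card (V - T)"
        using finV vV uv(3) by (intro psubset_card_mono) auto
      then show ?thesis using less.hyps hv vV less.prems(2) by auto
    qed
  qed
  have "?M \<in> h ` Pow V" using finP by (intro Max_in) auto
  then obtain T where "T \<subseteq> V" "h T = ?M" by auto
  hence "?M \<le> 0" using key by blast
  then show ?thesis using Mge[OF S] by simp
qed

lemma uniq:
  assumes h: "harm h" and hV: "h V = 0" and h0: "h {} = 0" and S: "S \<subseteq> V"
  shows "h S = 0"
proof -
  have "harm (\<lambda>S. - h S)" using h K_neg by (simp add: harm_def)
  then have "- h S \<le> 0" using max_principle[of "\<lambda>S. - h S"] hV h0 S by simp
  moreover have "h S \<le> 0" using max_principle[of h] h hV h0 S by simp
  ultimately show ?thesis by simp
qed


abbreviation P where "P T n S \<equiv> absorbed_by V E green aG aR bG bR T n S"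
abbreviation pr where "pr T S \<equiv> absorption_prob V E green aG aR bG bR T S"

lemma P_Suc: "P T (Suc n) S = (if S = T then 1 else K (P T n) S)" by (simp add: K_def wt_def)

lemma P_bounds: "S \<subseteq> V \<Longrightarrow> 0 \<le> P T n S \<and> P T n S \<le> 1"
proof (induction n arbitrary: S)
  case 0 then show ?case by simp
next
  case (Suc n)
  have hb: "0 \<le> P T n (moran_update S u v) \<and> P T n (moran_update S u v) \<le> 1"
    if "u \<in> V" "v \<in> nbrs V E u" for u v using Suc.IH[OF upd_sub[OF Suc.prems that]] .
  show ?case
  proof (cases "S = T")
    case True then show ?thesis by simp
  next
    case False
    have "K (P T n) S \<ge> 0" unfolding K_def
      by (intro sum_nonneg mult_nonneg_nonneg wt_nonneg) (use hb in blast)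
    moreover have "K (P T n) S \<le> (\<Sum>u\<in>V. \<Sum>v\<in>nbrs V E u. wt S u v)" unfolding K_def
      by (intro sum_mono mult_right_le_one_le wt_nonneg) (use hb in blast)+
    ultimately show ?thesis using False wt_sum by (simp add: P_Suc del: absorbed_by.simps(2))
  qed
qed

lemma P_mono: "S \<subseteq> V \<Longrightarrow> P T n S \<le> P T (Suc n) S"
proof (induction n arbitrary: S)
  case 0
  have hb: "0 \<le> P T 0 (moran_update S u v)" if "u \<in> V" "v \<in> nbrs V E u" for u v 
    using P_bounds[OF upd_sub[OF 0 that]] by blast
  have "K (P T 0) S \<ge> 0" unfolding K_def
     by (intro sum_nonneg mult_nonneg_nonneg wt_nonneg) (use hb in blast)
  then show ?case by (simp add: P_Suc del: absorbed_by.simps(2))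
next
  case (Suc n)
  have hb: "P T n (moran_update S u v) \<le> P T (Suc n) (moran_update S u v)" if "u \<in> V" "v \<in> nbrs V E u" for u v 
    using Suc.IH[OF upd_sub[OF Suc.prems that]] .
  have "K (P T n) S \<le> K (P T (Suc n)) S" unfolding K_def
    by (intro sum_mono mult_left_mono wt_nonneg) (use hb in blast)
  then show ?case using P_Suc[of T "Suc n" S] P_Suc[of T n S] by simp
qed

lemma P_lim: "S \<subseteq> V \<Longrightarrow> (\<lambda>n. P T n S) \<longlonglongrightarrow> pr T S"
proof -
  assume S: "S \<subseteq> V"
  have "incseq (\<lambda>n. P T n S)" using P_mono[OF S] by (intro incseq_SucI) auto
  moreover have "\<forall>i. P T i S \<le> 1" using P_bounds[OF S] by blast
  ultimately obtain L where L: "(\<lambda>n. P T n S) \<longlonglongrightarrow> L" using incseq_convergent[of "\<lambda>n. P T n S" 1] by blast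
  have "lim (\<lambda>n. P T n S) = L" by (rule limI[OF L])
  then show ?thesis unfolding absorption_prob_def using L by simp
qed

lemma K_lim: "S \<subseteq> V \<Longrightarrow> (\<lambda>n. K (P T n) S) \<longlonglongrightarrow> K (pr T) S"
  unfolding K_def
proof (intro tendsto_sum tendsto_mult_left)
  fix u v assume "S \<subseteq> V" "u \<in> V" "v \<in> nbrs V E u"
  then show "(\<lambda>n. P T n (moran_update S u v)) \<longlonglongrightarrow> pr T (moran_update S u v)"
    by (intro P_lim upd_sub)
qed

lemma upd_abs: "T = V \<or> T = {} \<Longrightarrow> u \<in> V \<Longrightarrow> v \<in> nbrs V E u \<Longrightarrow> moran_update T u v = T"
  by (auto simp: moran_update_def nbrs_def)

lemma K_abs: "T = V \<or> T = {} \<Longrightarrow> K g T = g T"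
proof -
  assume T: "T = V \<or> T = {}"
  have "K g T = (\<Sum>u\<in>V. \<Sum>v\<in>nbrs V E u. wt T u v * g T)" unfolding K_def
    using upd_abs[OF T] by (intro sum.cong refl) auto
  also have "\<dots> = g T" using wt_sum[of T] by (simp flip: sum_distrib_right)
  finally show ?thesis .
qed

lemma pr_harm: assumes T: "T = V \<or> T = {}" shows "harm (pr T)"
  unfolding harm_def
proof (intro allI impI)
  fix S assume S: "S \<subseteq> V"
  show "K (pr T) S = pr T S"
  proof (cases "S = T")
    case True then show ?thesis using K_abs T by simp
  next
    case False
    have "(\<lambda>n. P T (Suc n) S) \<longlonglongrightarrow> pr T S" using P_lim[OF S] by (rule LIMSEQ_Suc)
    moreover have "(\<lambda>n. P T (Suc n) S) = (\<lambda>n. K (P T n) S)" using False by (simp add: P_Suc del: absorbed_by.simps(2))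
    ultimately show ?thesis using K_lim[OF S] LIMSEQ_unique by metis
  qed
qed

lemma pr_self: "pr T T = 1"
proof -
  have "(\<lambda>n. P T n T) = (\<lambda>n. 1)" by (rule ext, case_tac n) auto
  then show ?thesis unfolding absorption_prob_def by simp
qed

lemma P_other: "T = V \<or> T = {} \<Longrightarrow> T' = V \<or> T' = {} \<Longrightarrow> T' \<noteq> T \<Longrightarrow> P T n T' = 0"
proof (induction n)
  case 0 then show ?case by simp
next
  case (Suc n)
  then show ?case using K_abs[of T' "P T n"] by (simp add: P_Suc del: absorbed_by.simps(2))
qed

lemma pr_other: "T = V \<or> T = {} \<Longrightarrow> T' = V \<or> T' = {} \<Longrightarrow> T' \<noteq> T \<Longrightarrow> pr T T' = 0"
proof -
  assume a: "T = V \<or> T = {}" "T' = V \<or> T' = {}" "T' \<noteq> T"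
  have "(\<lambda>n. P T n T') = (\<lambda>n. 0)" using P_other[OF a] by (intro ext) blast
  then show ?thesis unfolding absorption_prob_def by simp
qed

end

context moran begin

definition zG where "zG = bR * (aR * kG + bG * kR) / (aR * (aG * kR + bR * kG))"
definition zR where "zR = bG * (aG * kR + bR * kG) / (aG * (aR * kG + bG * kR))"
definition phi where "phi S = zG ^ card {x\<in>S. green x} * zR ^ card {x\<in>S. \<not> green x}"

lemma zG_pos: "zG > 0" unfolding zG_def using aG aR bG bR kG kR by (simp add: add_pos_pos)
lemma zR_pos: "zR > 0" unfolding zR_def using aG aR bG bR kG kR by (simp add: add_pos_pos)

lemma idG: "aG / kG * zG * (zR - 1) + bR / kR * (1 - zG) = 0"
  unfolding zG_def zR_def using idgen[OF aG aR bG bR, of "real kG" "real kR"] kG kR by simp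

lemma idR: "aR / kR * zR * (zG - 1) + bG / kG * (1 - zR) = 0"
  unfolding zG_def zR_def using idgen[OF aR aG bR bG, of "real kR" "real kG"] kG kR by simp

lemma zz: "zG * zR \<noteq> 1"
proof -
  have X: "aR * kG + bG * kR > 0" and Y: "aG * kR + bR * kG > 0" using aG aR bG bR kG kR by (simp_all add: add_pos_pos)
  have "zG * zR = (bR * bG) / (aR * aG)" unfolding zG_def zR_def using zzgen[OF aG aR X Y] by simp
  then show ?thesis using neq aG aR by (auto simp: field_simps)
qed

lemma phi_insert: "finite S \<Longrightarrow> v \<notin> S \<Longrightarrow> phi (insert v S) = phi S * (if green v then zG else zR)"
proof (cases "green v")
  case True
  assume f: "finite S" "v \<notin> S"
  have "{x \<in> insert v S. green x} = insert v {x\<in>S. green x}" using True by auto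
  moreover have "{x \<in> insert v S. \<not>green x} = {x\<in>S. \<not>green x}" using True by auto
  ultimately show ?thesis using True f by (simp add: phi_def)
next
  case False
  assume f: "finite S" "v \<notin> S"
  have "{x \<in> insert v S. green x} = {x\<in>S. green x}" using False by auto
  moreover have "{x \<in> insert v S. \<not>green x} = insert v {x\<in>S. \<not>green x}" using False by auto
  ultimately show ?thesis using False f by (simp add: phi_def)
qed

definition tt where "tt S u v = wt S u v * (phi (moran_update S u v) - phi S)"

lemma pair_main:
  assumes S: "S \<subseteq> V" and e: "E u v" and u: "u \<in> S" and v: "v \<notin> S"
  shows "tt S u v + tt S v u = 0"
proof -
  define S0 where "S0 = S - {u}"
  have fS: "finite S" using S finV finite_subset by blast
  have f0: "finite S0" "u \<notin> S0" and SS0: "S = insert u S0" using fS u by (auto simp: S0_def)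
  have p1: "phi S = phi S0 * (if green u then zG else zR)" using phi_insert[OF f0] SS0 by simp
  have p2: "phi (insert v S) = phi S * (if green v then zG else zR)" using phi_insert[OF fS v] .
  have uV: "u \<in> V" and vV: "v \<in> V" using E_in_V[OF e] by auto
  have gv: "green v = (\<not> green u)" using proper[OF e] by auto
  have m1: "moran_update S u v = insert v S" using u by (simp add: moran_update_def)
  have m2: "moran_update S v u = S0" using v by (simp add: moran_update_def S0_def)
  let ?F = "total_fitness V green aG aR bG bR S"
  have F: "?F \<noteq> 0" using F_pos[of S] by simp
  show ?thesis
  proof (cases "green u")
    case True
    have ku: "card (nbrs V E u) = kG" and kv: "card (nbrs V E v) = kR" using deg_G[OF uV True] deg_R[OF vV] gv True by auto
    have "tt S u v + tt S v u = aG/?F*(1/kG)*(phi S0*zG*zR - phi S0*zG) + bR/?F*(1/kR)*(phi S0 - phi S0*zG)"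
      unfolding tt_def wt_def m1 m2 p2 p1 ku kv using True gv u v by (simp add: fitness_def)
    also have "\<dots> = phi S0/?F*(aG/kG*zG*(zR-1) + bR/kR*(1-zG))"
      by (rule pairgen) (use F kG kR in auto)
    also have "\<dots> = 0" using idG by simp
    finally show ?thesis .
  next
    case False
    have ku: "card (nbrs V E u) = kR" and kv: "card (nbrs V E v) = kG" using deg_R[OF uV False] deg_G[OF vV] gv False by auto
    have "tt S u v + tt S v u = aR/?F*(1/kR)*(phi S0*zR*zG - phi S0*zR) + bG/?F*(1/kG)*(phi S0 - phi S0*zR)"
      unfolding tt_def wt_def m1 m2 p2 p1 ku kv using False gv u v by (simp add: fitness_def)
    also have "\<dots> = phi S0/?F*(aR/kR*zR*(zG-1) + bG/kG*(1-zR))"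
      by (rule pairgen) (use F kG kR in auto)
    also have "\<dots> = 0" using idR by simp
    finally show ?thesis .
  qed
qed

lemma pair_all:
  assumes S: "S \<subseteq> V" and e: "E u v"
  shows "tt S u v + tt S v u = 0"
proof -
  consider "u \<in> S" "v \<in> S" | "u \<notin> S" "v \<notin> S" | "u \<in> S" "v \<notin> S" | "u \<notin> S" "v \<in> S" by blast
  then show ?thesis
  proof cases
    case 1 then show ?thesis by (simp add: tt_def moran_update_def insert_absorb)
  next
    case 2 then show ?thesis by (simp add: tt_def moran_update_def)
  next
    case 3 then show ?thesis using pair_main[OF S e] by simp
  next
    case 4 then show ?thesis using pair_main[OF S E_sym[OF e]] by simp
  qed
qed

lemma phi_harm: "harm phi"
  unfolding harm_def
proof (intro allI impI)
  fix S assume S: "S \<subseteq> V"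
  define g where "g u v = (if E u v then tt S u v else 0)" for u v
  have "K phi S - phi S = K phi S - K (\<lambda>_. phi S) S" using K_const by simp
  also have "\<dots> = (\<Sum>u\<in>V. \<Sum>v\<in>nbrs V E u. tt S u v)"
    unfolding K_def tt_def by (simp add: sum_subtractf algebra_simps)
  also have "\<dots> = (\<Sum>u\<in>V. \<Sum>v\<in>V. g u v)"
    unfolding nbrs_def g_def by (simp add: sum.inter_filter finV)
  finally have A: "K phi S - phi S = (\<Sum>u\<in>V. \<Sum>v\<in>V. g u v)" .
  have sw: "(\<Sum>u\<in>V. \<Sum>v\<in>V. g u v) = (\<Sum>u\<in>V. \<Sum>v\<in>V. g v u)" by (rule sum.swap)
  have "(\<Sum>u\<in>V. \<Sum>v\<in>V. g u v) + (\<Sum>u\<in>V. \<Sum>v\<in>V. g v u) = (\<Sum>u\<in>V. \<Sum>v\<in>V. g u v + g v u)"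
    by (simp add: sum.distrib)
  also have "\<dots> = 0"
  proof (intro sum.neutral ballI)
    fix u v
    show "g u v + g v u = 0"
    proof (cases "E u v")
      case True
      then show ?thesis using pair_all[OF S True] E_sym[OF True] by (simp add: g_def)
    next
      case False
      then have "\<not> E v u" using E_sym by blast
      then show ?thesis using False by (simp add: g_def)
    qed
  qed
  finally have "K phi S - phi S = 0" using A sw by simp
  then show "K phi S = phi S" by simp
qed

end

context moran begin

abbreviation "NG \<equiv> card {v \<in> V. green v}"
abbreviation "NR \<equiv> card {v \<in> V. \<not> green v}"

lemma sum_col: "(\<Sum>v\<in>V. if green v then x else y) = real NG * x + real NR * y"
proof -
  have "(\<Sum>v\<in>V. if green v then x else y) = (\<Sum>v\<in>{v \<in> V. green v}. x) + (\<Sum>v\<in>{v \<in> V. \<not> green v}. y)"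
    using finV by (simp add: sum.If_cases Int_def Collect_conj_eq[symmetric] conj_commute)
  then show ?thesis by simp
qed

lemma card_V: "card V = NG + NR"
proof -
  have "V = {v \<in> V. green v} \<union> {v \<in> V. \<not> green v}" by auto
  then have "card V = card ({v \<in> V. green v} \<union> {v \<in> V. \<not> green v})" by simp
  also have "\<dots> = NG + NR" using finV by (intro card_Un_disjoint) auto
  finally show ?thesis .
qed

lemma phi_single: "phi {v} = (if green v then zG else zR)"
proof (cases "green v")
  case True
  then have e: "{x\<in>{v}. green x} = {v}" "{x\<in>{v}. \<not> green x} = {}" by auto
  show ?thesis using True unfolding phi_def e by simp
next
  case False
  then have e: "{x\<in>{v}. green x} = {}" "{x\<in>{v}. \<not> green x} = {v}" by auto
  show ?thesis using False unfolding phi_def e by simp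
qed

lemma phi_empty: "phi {} = 1" by (simp add: phi_def)

lemma phi_V: "phi V = zG ^ NG * zR ^ NR" by (simp add: phi_def)

lemma phi_pos: "phi S > 0" unfolding phi_def using zG_pos zR_pos by simp

lemma colors: "\<exists>g\<in>V. green g" "\<exists>r\<in>V. \<not> green r"
proof -
  obtain x where x: "x \<in> V" using Vne by auto
  have "nbrs V E x \<noteq> {}" using card_nbrs_pos[OF x] by auto
  then obtain y where "E x y" unfolding nbrs_def by auto
  then have "y \<in> V" "green x \<noteq> green y" using E_in_V proper by auto
  then show "\<exists>g\<in>V. green g" "\<exists>r\<in>V. \<not> green r" using x by (cases "green x"; auto)+
qed

lemma harm_comb: "harm f \<Longrightarrow> harm (\<lambda>S. phi S - c - d * f S)"
proof -
  assume f: "harm f"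
  show ?thesis unfolding harm_def
  proof (intro allI impI)
    fix S assume S: "S \<subseteq> V"
    have "K (\<lambda>S. phi S - c - d * f S) S = K (\<lambda>S. phi S - c) S - K (\<lambda>S. d * f S) S"
      using K_diff[of "\<lambda>S. phi S - c" "\<lambda>S. d * f S" S] by simp
    also have "K (\<lambda>S. phi S - c) S = K phi S - K (\<lambda>S. c) S"
      using K_diff[of phi "\<lambda>S. c" S] by simp
    also have "K (\<lambda>S. d * f S) S = d * K f S" by (rule K_cmult)
    finally show "K (\<lambda>S. phi S - c - d * f S) S = phi S - c - d * f S"
      using K_const phi_harm f S by (simp add: harm_def)
  qed
qed

lemma phiV_ne1: "phi V \<noteq> 1"
proof
  assume p1: "phi V = 1"
  have "phi S = 1" if S: "S \<subseteq> V" for S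
  proof -
    let ?h = "\<lambda>S. phi S - 1 - (phi V - 1) * pr V S"
    have "?h S = 0"
    proof (rule uniq[OF harm_comb[OF pr_harm] _ _ S])
      show "?h V = 0" using pr_self by simp
      show "?h {} = 0" using pr_other[of V "{}"] Vne phi_empty by simp
    qed simp
    then show ?thesis using p1 by simp
  qed
  moreover obtain g r where "g \<in> V" "green g" "r \<in> V" "\<not> green r" using colors by blast
  ultimately have "phi {g} = 1" "phi {r} = 1" by auto
  then have "zG = 1" "zR = 1" using \<open>green g\<close> \<open>\<not> green r\<close> phi_single by auto
  then show False using zz by simp
qed

lemma prA: "S \<subseteq> V \<Longrightarrow> pr V S = (1 - phi S) / (1 - phi V)"
proof -
  assume S: "S \<subseteq> V"
  let ?h = "\<lambda>S. phi S - 1 - (phi V - 1) * pr V S"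
  have "?h S = 0"
  proof (rule uniq[OF harm_comb[OF pr_harm] _ _ S])
    show "?h V = 0" using pr_self by simp
    show "?h {} = 0" using pr_other[of V "{}"] Vne phi_empty by simp
  qed simp
  then show ?thesis using phiV_ne1 by (simp add: field_simps)
qed

lemma prB: "S \<subseteq> V \<Longrightarrow> pr {} S = (phi S - phi V) / (1 - phi V)"
proof -
  assume S: "S \<subseteq> V"
  let ?h = "\<lambda>S. phi S - phi V - (1 - phi V) * pr {} S"
  have "?h S = 0"
  proof (rule uniq[OF harm_comb[OF pr_harm] _ _ S])
    show "?h V = 0" using pr_other[of "{}" V] Vne by simp
    show "?h {} = 0" using pr_self phi_empty by simp
  qed simp
  then show ?thesis using phiV_ne1 by (simp add: field_simps)
qed

lemma rhoA: "rho_A V E green aG aR bG bR = (1 - (NG * zG + NR * zR) / (NG + NR)) / (1 - zG ^ NG * zR ^ NR)"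
proof -
  have "(\<Sum>v\<in>V. pr V {v}) = (\<Sum>v\<in>V. (1 - (if green v then zG else zR)) / (1 - phi V))"
    using prA phi_single by (intro sum.cong) auto
  also have "\<dots> = (real (card V) - (NG*zG + NR*zR)) / (1 - phi V)"
    by (simp add: sum_divide_distrib[symmetric] sum_subtractf sum_col)
  finally have 1: "(\<Sum>v\<in>V. pr V {v}) = (real (card V) - (NG*zG + NR*zR)) / (1 - phi V)" .
  have N: "real NG + real NR > 0" using card_V finV Vne card_gt_0_iff by (metis of_nat_0_less_iff of_nat_add)
  have P: "1 - phi V \<noteq> 0" using phiV_ne1 by simp
  show ?thesis unfolding rho_A_def 1 using N P unfolding card_V phi_V by (simp add: field_simps)
qed

lemma rhoB:
  fixes eG eR :: real
  defines "eG \<equiv> aR * (bR * kG + aG * kR) / (bR * (bG * kR + aR * kG))"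
    and "eR \<equiv> aG * (bG * kR + aR * kG) / (bG * (bR * kG + aG * kR))"
  shows "rho_B V E green aG aR bG bR = (1 - (NG * eG + NR * eR) / (NG + NR)) / (1 - eG ^ NG * eR ^ NR)"
proof -
  have eG: "eG = 1 / zG" unfolding eG_def zG_def by (simp add: add.commute)
  have eR: "eR = 1 / zR" unfolding eR_def zR_def by (simp add: add.commute)
  have "phi (V - {v}) = phi V / (if green v then zG else zR)" if v: "v \<in> V" for v
  proof -
    have "phi V = phi (insert v (V - {v}))" using v by (simp add: insert_absorb)
    also have "\<dots> = phi (V - {v}) * (if green v then zG else zR)" using finV by (intro phi_insert) auto
    finally show ?thesis using zG_pos zR_pos by (simp add: field_simps)
  qed
  then have "(\<Sum>v\<in>V. pr {} (V - {v})) = (\<Sum>v\<in>V. (phi V * (if green v then eG else eR) - phi V) / (1 - phi V))"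
    using prB eG eR by (intro sum.cong) auto
  also have "\<dots> = (phi V * (NG*eG + NR*eR) - phi V * real (card V)) / (1 - phi V)"
    by (simp add: sum_divide_distrib[symmetric] sum_subtractf sum_col flip: sum_distrib_left)
  finally have 1: "(\<Sum>v\<in>V. pr {} (V - {v})) = (phi V * (NG*eG + NR*eR) - phi V * real (card V)) / (1 - phi V)" .
  have N: "real NG + real NR > 0" using card_V finV Vne card_gt_0_iff by (metis of_nat_0_less_iff of_nat_add)
  have P: "1 - phi V \<noteq> 0" using phiV_ne1 by simp
  have Q: "phi V > 0" using phi_pos by simp
  have E: "eG ^ NG * eR ^ NR = 1 / phi V" unfolding eG eR phi_V by (simp add: power_one_over)
  have "(phi V * (NG*eG + NR*eR) - phi V * real (card V)) / (1 - phi V) / real (card V)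
     = (1 - (NG*eG + NR*eR) / real (card V)) / (1 - 1 / phi V)"
    using N Q phiV_ne1 unfolding card_V by (intro finalB) auto
  then show ?thesis unfolding rho_B_def 1 E unfolding card_V by simp
qed

end


lemma ne1_aux:
  fixes a b c d k :: real
  assumes "a > 0" "b > 0" "c > 0" "d > 0" "a * b \<noteq> c * d"
  shows "c * d * k / (a * b * k) \<noteq> 1"
proof (cases "k = 0")
  case True then show ?thesis by simp
next
  case False
  then have "c * d * k / (a * b * k) = c * d / (a * b)" by simp
  then show ?thesis using assms by (auto simp: field_simps)
qed

theorem theorem1:
  fixes V :: "'v set" and E :: "'v \<Rightarrow> 'v \<Rightarrow> bool" and green :: "'v \<Rightarrow> bool"
    and aG aR bG bR :: real and kG kR :: nat
  assumes finV: "finite V" and nonempty: "V \<noteq> {}"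
    and E_in_V: "\<And>u v. E u v \<Longrightarrow> u \<in> V \<and> v \<in> V"
    and E_sym: "\<And>u v. E u v \<Longrightarrow> E v u"
    and E_irrefl: "\<And>u. \<not> E u u"
    and connected: "\<forall>u\<in>V. \<forall>v\<in>V. E\<^sup>*\<^sup>* u v"
    and proper: "\<And>u v. E u v \<Longrightarrow> green u \<noteq> green v"
    and deg_G: "\<And>u. u \<in> V \<Longrightarrow> green u \<Longrightarrow> card (nbrs V E u) = kG"
    and deg_R: "\<And>u. u \<in> V \<Longrightarrow> \<not> green u \<Longrightarrow> card (nbrs V E u) = kR"
    and pos: "aG > 0" "aR > 0" "bG > 0" "bR > 0"
    and neq: "aG * aR \<noteq> bG * bR"
  defines "NG \<equiv> card {v \<in> V. green v}" and "NR \<equiv> card {v \<in> V. \<not> green v}"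
    and "\<zeta>G \<equiv> bR * (aR * kG + bG * kR) / (aR * (aG * kR + bR * kG))"
    and "\<zeta>R \<equiv> bG * (aG * kR + bR * kG) / (aG * (aR * kG + bG * kR))"
    and "\<eta>G \<equiv> aR * (bR * kG + aG * kR) / (bR * (bG * kR + aR * kG))"
    and "\<eta>R \<equiv> aG * (bG * kR + aR * kG) / (bG * (bR * kG + aG * kR))"
  shows "rho_A V E green aG aR bG bR =
           (1 - (NG * \<zeta>G + NR * \<zeta>R) / (NG + NR)) / (1 - \<zeta>G ^ NG * \<zeta>R ^ NR) \<and>
         rho_B V E green aG aR bG bR =
           (1 - (NG * \<eta>G + NR * \<eta>R) / (NG + NR)) / (1 - \<eta>G ^ NG * \<eta>R ^ NR)"
proof (cases "card V = 1")
  case True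
  then obtain x where Vx: "V = {x}" by (auto simp: card_Suc_eq)
  have nb: "nbrs V E x = {}" using Vx E_irrefl by (auto simp: nbrs_def)
  have A1: "(\<lambda>n. absorbed_by V E green aG aR bG bR V n {x}) = (\<lambda>n. 1)"
    using Vx by (intro ext, case_tac n) auto
  have B1: "(\<lambda>n. absorbed_by V E green aG aR bG bR {} n (V - {x})) = (\<lambda>n. 1)"
    using Vx by (intro ext, case_tac n) auto
  have rA: "rho_A V E green aG aR bG bR = 1"
    unfolding rho_A_def absorption_prob_def using Vx A1 by simp
  have rB: "rho_B V E green aG aR bG bR = 1"
    unfolding rho_B_def absorption_prob_def using Vx B1 by simp
  show ?thesis
  proof (cases "green x")
    case g: True
    have k: "kG = 0" using deg_G[of x] Vx nb g by simp
    have e1: "{v\<in>V. green v} = {x}" and e2: "{v\<in>V. \<not> green v} = {}" using Vx g by auto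
    have N: "NG = 1" "NR = 0" unfolding NG_def NR_def e1 e2 by simp_all
    have z: "\<zeta>G \<noteq> 1" unfolding \<zeta>G_def k using ne1_aux[OF pos(2,1,4,3), of "real kR"] neq
      by (simp add: mult.commute mult.left_commute)
    have e: "\<eta>G \<noteq> 1" unfolding \<eta>G_def k using ne1_aux[OF pos(4,3,2,1), of "real kR"] neq
      by (simp add: mult.commute mult.left_commute)
    show ?thesis using rA rB z e unfolding N by simp
  next
    case r: False
    have k: "kR = 0" using deg_R[of x] Vx nb r by simp
    have e1: "{v\<in>V. green v} = {}" and e2: "{v\<in>V. \<not> green v} = {x}" using Vx r by auto
    have N: "NG = 0" "NR = 1" unfolding NG_def NR_def e1 e2 by simp_all
    have z: "\<zeta>R \<noteq> 1" unfolding \<zeta>R_def k using ne1_aux[OF pos(1,2,3,4), of "real kG"] neq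
      by (simp add: mult.commute mult.left_commute)
    have e: "\<eta>R \<noteq> 1" unfolding \<eta>R_def k using ne1_aux[OF pos(3,4,1,2), of "real kG"] neq
      by (simp add: mult.commute mult.left_commute)
    show ?thesis using rA rB z e unfolding N by simp
  qed
next
  case False
  have "card V \<noteq> 0" using finV nonempty by simp
  then have c2: "card V \<ge> 2" using False by linarith
  have nbr: "\<exists>y. E u y" if u: "u \<in> V" for u
  proof -
    obtain w where w: "w \<in> V" "w \<noteq> u"
    proof -
      have "V - {u} \<noteq> {}"
      proof
        assume "V - {u} = {}"
        then have "V = {u}" using u by auto
        then show False using c2 by simp
      qed
      then show ?thesis using that by blast
    qed
    have "E\<^sup>*\<^sup>* u w" using connected u w by blast
    then show ?thesis using w(2) by (cases rule: converse_rtranclpE) auto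
  qed
  obtain x where x: "x \<in> V" using nonempty by auto
  obtain y where xy: "E x y" using nbr[OF x] by blast
  have y: "y \<in> V" using E_in_V[OF xy] by simp
  have cpos: "card (nbrs V E u) > 0" if uV: "u \<in> V" for u
  proof -
    obtain z where "E u z" using nbr[OF uV] by blast
    then have "z \<in> nbrs V E u" using E_in_V by (auto simp: nbrs_def)
    moreover have "finite (nbrs V E u)" using finV by (simp add: nbrs_def)
    ultimately show ?thesis by (auto simp: card_gt_0_iff)
  qed
  have kpos: "kG > 0 \<and> kR > 0"
  proof (cases "green x")
    case True
    then have "\<not> green y" using proper[OF xy] by simp
    then show ?thesis using deg_G[OF x True] deg_R[OF y] cpos x y by auto
  next
    case False
    then have "green y" using proper[OF xy] by simp
    then show ?thesis using deg_R[OF x False] deg_G[OF y] cpos x y by auto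
  qed
  interpret m: moran V E green aG aR bG bR kG kR
    using finV nonempty E_in_V E_sym connected proper deg_G deg_R pos kpos neq
    by unfold_locales auto
  show ?thesis
    using m.rhoA m.rhoB unfolding m.zG_def m.zR_def NG_def NR_def \<zeta>G_def \<zeta>R_def \<eta>G_def \<eta>R_def
    by simp
qed


end
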